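(* Let $\mathbb{K}$ be a perfect field, $\mathbf{u}_1,\dots,\mathbf{u}_t\in\mathbb{K}^{\mathbb{N}^n}$, and assume $J=\mathrm{ann}(\mathbf{u}_1,\dots,\mathbf{u}_t)\subset\mathbb{K}[X_1,\dots,X_n]$ is zero-dimensional. Let $B$ be an integer such that for every $j$ the minimal polynomial of $X_j$ in $\mathbb{K}[X_1,\dots,X_n]/J$ has degree at most $B$. Fix $j\in\{1,\dots,n\}$ and a finite sequence of monomials $\mathscr{B}'_{j+1}$ in $\mathbb{K}[X_{j+1},\dots,X_n]$ (with $\mathscr{B}'_{n+1}=(1)$ if $j=n$), and let $\mathscr{C}_{j+1}=\{b'X_j^k : b'\in\mathscr{B}'_{j+1},\ 0\le k\le B-1\}$. For a finite family $\mathscr{B}$ of monomials in $\mathbb{K}[X_j,\dots,X_n]$, let $\mathsf{M}_{\mathscr{B}}$ be the matrix with rows indexed by pairs $(i,b')$, $1\le i\le t$, $b'\in\mathscr{C}_{j+1}$, columns indexed by $b\in\mathscr{B}$, and entries $\langle\mathbf{u}_i\mid bb'\rangle$. Then: (i) if $\mathscr{B}$ is dependent, the right nullspace of $\mathsf{M}_{\mathscr{B}}$ is non-trivial; (ii) if moreover $j\le n-1$, $\mathscr{B}'_{j+1}=\mathscr{B}_{j+1}$ and $J_j\cap\mathbb{K}[X_{j+1},\dots,X_n]=J_{j+1}$, then conversely, if the right nullspace of $\mathsf{M}_{\mathscr{B}}$ is non-trivial, $\mathscr{B}$ is dependent.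
   Context: For $m\in\mathbb{N}^n$, $\mathbf{X}^m=X_1^{m_1}\cdots X_n^{m_n}$; for a sequence $\mathbf{u}=(u_m)_m$ and $f=\sum_m f_m\mathbf{X}^m$, $\langle\mathbf{u}\mid f\rangle=\sum_m f_mu_m$, $f\cdot\mathbf{u}=(\langle\mathbf{u}\mid\mathbf{X}^mf\rangle)_m$, $\mathrm{ann}(\mathbf{u})$ is the ideal of $f$ with $f\cdot\mathbf{u}=0$ and $\mathrm{ann}(\mathbf{u}_1,\dots,\mathbf{u}_t)=\bigcap_i\mathrm{ann}(\mathbf{u}_i)$ (the same definitions apply to sequences indexed by $\mathbb{N}^{n-j+1}$ and polynomials in $X_j,\dots,X_n$). For $j=1,\dots,n$, $\pi_j(\mathbf{u}_i)$ is the sequence indexed by $\mathbb{N}^{n-j+1}$ with $\langle\pi_j(\mathbf{u}_i)\mid(m_j,\dots,m_n)\rangle=\langle\mathbf{u}_i\mid(0,\dots,0,m_j,\dots,m_n)\rangle$, and $J_j=\mathrm{ann}(\pi_j(\mathbf{u}_1),\dots,\pi_j(\mathbf{u}_t))\subset\mathbb{K}[X_j,\dots,X_n]$. $\mathscr{B}_j$ denotes the set of standard monomials (monomial basis) of $\mathbb{K}[X_j,\dots,X_n]/J_j$ with respect to the lexicographic order $X_j>\cdots>X_n$. A family of monomials in $\mathbb{K}[X_j,\dots,X_n]$ is independent if its images in $\mathbb{K}[X_j,\dots,X_n]/J_j$ are $\mathbb{K}$-linearly independent, and dependent otherwise. *)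

theory Defs
  imports "HOL-Computational_Algebra.Polynomial"
begin

text \<open>Exponent vectors (monomials) are functions nat => nat; the monomial
  X^m in the variables X_i, i in V, is an m vanishing outside V. Multivariate polynomials
  in the variables V are finitely supported coefficient functions on such monomials.
  Sequences u in K^(N^n) are functions (nat => nat) => K (only the values on exponent
  vectors supported in {1..n} matter). The t sequences are u 1, ..., u t.\<close>

definition perfect_field :: "'a::field itself \<Rightarrow> bool" where
  "perfect_field _ \<longleftrightarrow> CHAR('a) = 0 \<or> surj (\<lambda>x::'a. x ^ CHAR('a))"

definition mons :: "nat set \<Rightarrow> (nat \<Rightarrow> nat) set" where
  "mons V = {m. \<forall>i. i \<notin> V \<longrightarrow> m i = 0}"

definition madd :: "(nat \<Rightarrow> nat) \<Rightarrow> (nat \<Rightarrow> nat) \<Rightarrow> nat \<Rightarrow> nat" where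
  "madd m k = (\<lambda>i. m i + k i)"

definition polys :: "nat set \<Rightarrow> ((nat \<Rightarrow> nat) \<Rightarrow> 'a::field) set" where
  "polys V = {f. finite {m. f m \<noteq> 0} \<and> {m. f m \<noteq> 0} \<subseteq> mons V}"

definition mono :: "(nat \<Rightarrow> nat) \<Rightarrow> (nat \<Rightarrow> nat) \<Rightarrow> 'a::field" where
  "mono m = (\<lambda>x. if x = m then 1 else 0)"

text \<open>(f . u)_m = < u | X^m f > = sum_k f_k u_(m+k).\<close>
definition act :: "((nat \<Rightarrow> nat) \<Rightarrow> 'a::field) \<Rightarrow> ((nat \<Rightarrow> nat) \<Rightarrow> 'a) \<Rightarrow> (nat \<Rightarrow> nat) \<Rightarrow> 'a" where
  "act f u m = (\<Sum>k\<in>{k. f k \<noteq> 0}. f k * u (madd m k))"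

text \<open>ann of the sequences restricted to the variables V (i.e. of their projections),
  as an ideal of K[X_i : i in V]. With V = {j..n} this is J_j; with V = {1..n} it is J.\<close>
definition ann_vars :: "nat set \<Rightarrow> nat \<Rightarrow> (nat \<Rightarrow> (nat \<Rightarrow> nat) \<Rightarrow> 'a::field)
    \<Rightarrow> ((nat \<Rightarrow> nat) \<Rightarrow> 'a) set" where
  "ann_vars V t u = {f \<in> polys V. \<forall>i\<in>{1..t}. \<forall>m\<in>mons V. act f (u i) m = 0}"

text \<open>Zero-dimensional: K[X_V]/I is finite-dimensional (finitely many monomials span it).\<close>
definition zero_dim :: "nat set \<Rightarrow> ((nat \<Rightarrow> nat) \<Rightarrow> 'a::field) set \<Rightarrow> bool" where
  "zero_dim V I \<longleftrightarrow> (\<exists>S. finite S \<and> S \<subseteq> mons V \<and>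
     (\<forall>m\<in>mons V. \<exists>c. (\<lambda>x. mono m x - (\<Sum>s\<in>S. c s * mono s x)) \<in> I))"

text \<open>p(X_j) for a univariate polynomial p.\<close>
definition var_eval :: "nat \<Rightarrow> 'a::field poly \<Rightarrow> (nat \<Rightarrow> nat) \<Rightarrow> 'a" where
  "var_eval j p = (\<lambda>m. if (\<forall>i. i \<noteq> j \<longrightarrow> m i = 0) then coeff p (m j) else 0)"

definition minpoly_deg :: "((nat \<Rightarrow> nat) \<Rightarrow> 'a::field) set \<Rightarrow> nat \<Rightarrow> nat" where
  "minpoly_deg I j = (LEAST d. \<exists>p. lead_coeff p = 1 \<and> degree p = d \<and> var_eval j p \<in> I)"

definition lincomb :: "(nat \<Rightarrow> nat) list \<Rightarrow> (nat \<Rightarrow> 'a::field) \<Rightarrow> (nat \<Rightarrow> nat) \<Rightarrow> 'a" where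
  "lincomb bs c = (\<lambda>m. \<Sum>l\<in>{l. l < length bs \<and> bs ! l = m}. c l)"

definition dependent_mod :: "((nat \<Rightarrow> nat) \<Rightarrow> 'a::field) set \<Rightarrow> (nat \<Rightarrow> nat) list \<Rightarrow> bool" where
  "dependent_mod I bs \<longleftrightarrow> (\<exists>c. (\<exists>l<length bs. c l \<noteq> 0) \<and> lincomb bs c \<in> I)"

definition lex_less :: "(nat \<Rightarrow> nat) \<Rightarrow> (nat \<Rightarrow> nat) \<Rightarrow> bool" where
  "lex_less m m' \<longleftrightarrow> (\<exists>k. (\<forall>i<k. m i = m' i) \<and> m k < m' k)"

definition lead_mon :: "((nat \<Rightarrow> nat) \<Rightarrow> 'a::zero) \<Rightarrow> nat \<Rightarrow> nat" where
  "lead_mon f = (THE m. f m \<noteq> 0 \<and> (\<forall>m'. f m' \<noteq> 0 \<longrightarrow> m' = m \<or> lex_less m' m))"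

definition mdvd :: "(nat \<Rightarrow> nat) \<Rightarrow> (nat \<Rightarrow> nat) \<Rightarrow> bool" where
  "mdvd m m' \<longleftrightarrow> (\<forall>i. m i \<le> m' i)"

definition std_mons :: "nat set \<Rightarrow> ((nat \<Rightarrow> nat) \<Rightarrow> 'a::field) set \<Rightarrow> (nat \<Rightarrow> nat) set" where
  "std_mons V I = {m \<in> mons V. \<not> (\<exists>f\<in>I. f \<noteq> (\<lambda>_. 0) \<and> mdvd (lead_mon f) m)}"

definition Cset :: "nat \<Rightarrow> nat \<Rightarrow> (nat \<Rightarrow> nat) list \<Rightarrow> (nat \<Rightarrow> nat) set" where
  "Cset j B Bp = {madd b' (\<lambda>x. if x = j then k else 0) | b' k. b' \<in> set Bp \<and> k < B}"

text \<open>Right nullspace of M_B non-trivial: a nonzero vector v indexed by the columns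
  (positions of bs) with sum_l <u_i | bs!l * b'> v_l = 0 for all rows (i,b').\<close>
definition null_nontriv :: "nat \<Rightarrow> (nat \<Rightarrow> (nat \<Rightarrow> nat) \<Rightarrow> 'a::field) \<Rightarrow> (nat \<Rightarrow> nat) set
    \<Rightarrow> (nat \<Rightarrow> nat) list \<Rightarrow> bool" where
  "null_nontriv t u C bs \<longleftrightarrow> (\<exists>v. (\<exists>l<length bs. v l \<noteq> 0) \<and>
     (\<forall>i\<in>{1..t}. \<forall>b'\<in>C. (\<Sum>l<length bs. u i (madd (bs ! l) b') * v l) = 0))"

end

theory Submission
  imports Defs
begin


lemma madd_comm: "madd a b = madd b a" by (auto simp: madd_def)
lemma madd_assoc: "madd (madd a b) c = madd a (madd b c)" by (auto simp: madd_def)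
lemma madd_0[simp]: "madd a (\<lambda>_. 0) = a" by (auto simp: madd_def)

lemma hom_sys:
  fixes c :: "'k \<Rightarrow> 's \<Rightarrow> 'a::field"
  assumes "finite S" "finite K" "card S < card K"
  shows "\<exists>a. (\<exists>k\<in>K. a k \<noteq> 0) \<and> (\<forall>s\<in>S. (\<Sum>k\<in>K. a k * c k s) = 0)"
  using assms
proof (induction S arbitrary: K c rule: finite_induct)
  case empty
  then obtain k where "k \<in> K" by (metis card.empty card_gt_0_iff ex_in_conv)
  then show ?case by (intro exI[of _ "\<lambda>_. 1"]) auto
next
  case (insert s0 S)
  show ?case
  proof (cases "\<forall>k\<in>K. c k s0 = 0")
    case True
    from insert.IH[of K c] insert.prems insert.hyps obtain a where
      a: "\<exists>k\<in>K. a k \<noteq> 0" "\<forall>s\<in>S. (\<Sum>k\<in>K. a k * c k s) = 0" by auto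
    show ?thesis using a True by (intro exI[of _ a]) auto
  next
    case False
    then obtain k0 where k0: "k0 \<in> K" "c k0 s0 \<noteq> 0" by auto
    define K' where "K' = K - {k0}"
    define c' where "c' = (\<lambda>k s. c k s - c k s0 / c k0 s0 * c k0 s)"
    have "card S < card K'" using insert.prems insert.hyps k0 unfolding K'_def by auto
    from insert.IH[of K' c'] this insert.prems obtain a' where
      a': "\<exists>k\<in>K'. a' k \<noteq> 0" "\<forall>s\<in>S. (\<Sum>k\<in>K'. a' k * c' k s) = 0" unfolding K'_def by auto
    define a where "a = (\<lambda>k. if k = k0 then - (\<Sum>k\<in>K'. a' k * c k s0) / c k0 s0 else a' k)"
    have split: "(\<Sum>k\<in>K. a k * c k s) = a k0 * c k0 s + (\<Sum>k\<in>K'. a' k * c k s)" for s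
    proof -
      have "(\<Sum>k\<in>K. a k * c k s) = a k0 * c k0 s + (\<Sum>k\<in>K'. a k * c k s)"
        unfolding K'_def using k0 insert.prems by (simp add: sum.remove)
      moreover have "(\<Sum>k\<in>K'. a k * c k s) = (\<Sum>k\<in>K'. a' k * c k s)"
        unfolding K'_def a_def by (rule sum.cong) auto
      ultimately show ?thesis by simp
    qed
    have "\<forall>s\<in>insert s0 S. (\<Sum>k\<in>K. a k * c k s) = 0"
    proof
      fix s assume s: "s \<in> insert s0 S"
      show "(\<Sum>k\<in>K. a k * c k s) = 0"
      proof (cases "s = s0")
        case True
        then show ?thesis unfolding split by (simp add: a_def k0)
      next
        case False
        with s have "s \<in> S" by auto
        with a' have "(\<Sum>k\<in>K'. a' k * c' k s) = 0" by auto
        moreover have "(\<Sum>k\<in>K'. a' k * c' k s) = (\<Sum>k\<in>K'. a' k * c k s) - (\<Sum>k\<in>K'. a' k * c k s0) / c k0 s0 * c k0 s"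
          unfolding c'_def by (simp add: algebra_simps sum_subtractf sum_distrib_left sum_divide_distrib sum_distrib_right)
        ultimately show ?thesis unfolding split by (simp add: a_def k0)
      qed
    qed
    moreover have "\<exists>k\<in>K. a k \<noteq> 0" using a' unfolding a_def K'_def by auto
    ultimately show ?thesis by blast
  qed
qed



lemma lex_irrefl: "\<not> lex_less m m" by (auto simp: lex_less_def)

lemma lex_trans: assumes "lex_less a b" "lex_less b c" shows "lex_less a c"
proof -
  from assms obtain k1 where k1: "\<forall>i<k1. a i = b i" "a k1 < b k1" by (auto simp: lex_less_def)
  from assms obtain k2 where k2: "\<forall>i<k2. b i = c i" "b k2 < c k2" by (auto simp: lex_less_def)
  show ?thesis unfolding lex_less_def
  proof (cases "k1 < k2")
    case True then show "\<exists>k. (\<forall>i<k. a i = c i) \<and> a k < c k" using k1 k2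
      by (intro exI[of _ k1]) auto
  next
    case False
    have "a k2 < c k2"
    proof (cases "k1 = k2")
      case True then show ?thesis using k1 k2 by auto
    next
      case False then have "k2 < k1" using \<open>\<not> k1 < k2\<close> by auto
      then show ?thesis using k1 k2 by auto
    qed
    then show "\<exists>k. (\<forall>i<k. a i = c i) \<and> a k < c k" using k1 k2 False
      by (intro exI[of _ k2]) auto
  qed
qed

lemma lex_total: assumes "a \<noteq> b" shows "lex_less a b \<or> lex_less b a"
proof -
  from assms obtain i where "a i \<noteq> b i" by auto
  define k where "k = (LEAST i. a i \<noteq> b i)"
  have "a k \<noteq> b k" unfolding k_def by (rule LeastI) fact
  moreover have "\<forall>i<k. a i = b i" unfolding k_def using not_less_Least by blast
  ultimately show ?thesis
  proof (cases "a k < b k")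
    case True then show ?thesis using \<open>\<forall>i<k. a i = b i\<close> unfolding lex_less_def by blast
  next
    case False then have "b k < a k" using \<open>a k \<noteq> b k\<close> by simp
    then show ?thesis using \<open>\<forall>i<k. a i = b i\<close> unfolding lex_less_def by (metis)
  qed
qed

lemma lex_madd: "lex_less a b \<Longrightarrow> lex_less (madd a w) (madd b w)"
  by (auto simp: lex_less_def madd_def)

lemma lex_max_exists: "finite F \<Longrightarrow> F \<noteq> {} \<Longrightarrow> \<exists>m\<in>F. \<forall>m'\<in>F. m' = m \<or> lex_less m' m"
proof (induction F rule: finite_ne_induct)
  case (singleton x) then show ?case by auto
next
  case (insert x F)
  then obtain m where m: "m \<in> F" "\<forall>m'\<in>F. m' = m \<or> lex_less m' m" by auto
  show ?case
  proof (cases "lex_less m x")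
    case True
    have "\<forall>m'\<in>insert x F. m' = x \<or> lex_less m' x"
    proof
      fix m' assume "m' \<in> insert x F"
      then consider "m' = x" | "m' = m" | "lex_less m' m" using m by blast
      then show "m' = x \<or> lex_less m' x"
      proof cases
        case 3 then show ?thesis using lex_trans[OF 3 True] by simp
      qed (use True in simp_all)
    qed
    then show ?thesis by blast
  next
    case False then have "x = m \<or> lex_less x m" using lex_total by blast
    then show ?thesis using m by (intro bexI[of _ m]) auto
  qed
qed

lemma lead_mon:
  assumes "finite {m. f m \<noteq> 0}" "f \<noteq> (\<lambda>_. 0)"
  shows "f (lead_mon f) \<noteq> 0" "\<And>m'. f m' \<noteq> 0 \<Longrightarrow> m' = lead_mon f \<or> lex_less m' (lead_mon f)"
proof -
  have ne: "{m. f m \<noteq> 0} \<noteq> {}" using assms(2) by auto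
  obtain m where m: "f m \<noteq> 0" "\<forall>m'. f m' \<noteq> 0 \<longrightarrow> m' = m \<or> lex_less m' m"
    using lex_max_exists[OF assms(1) ne] by auto
  have uniq: "m2 = m" if "f m2 \<noteq> 0 \<and> (\<forall>m'. f m' \<noteq> 0 \<longrightarrow> m' = m2 \<or> lex_less m' m2)" for m2
  proof (rule ccontr)
    assume ne: "m2 \<noteq> m"
    have "lex_less m2 m" using that m ne by blast
    moreover have "lex_less m m2" using that m ne by blast
    ultimately show False using lex_trans lex_irrefl by blast
  qed
  have "lead_mon f = m" unfolding lead_mon_def
    by (rule the_equality) (use m uniq in blast)+
  then show "f (lead_mon f) \<noteq> 0" "\<And>m'. f m' \<noteq> 0 \<Longrightarrow> m' = lead_mon f \<or> lex_less m' (lead_mon f)"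
    using m by auto
qed

lemma lex_list:
  assumes "lex_less a b" "\<forall>i>N. a i = 0" "\<forall>i>N. b i = 0"
  shows "(map a [0..<Suc N], map b [0..<Suc N]) \<in> lex less_than"
proof -
  from assms obtain k where k: "\<forall>i<k. a i = b i" "a k < b k" by (auto simp: lex_less_def)
  have kN: "k \<le> N" using k(2) assms(2,3) by (metis not_less_zero not_le)
  have sp: "[0..<Suc N] = [0..<k] @ k # [Suc k..<Suc N]"
  proof -
    have "[0..<Suc N] = [0..<k] @ [k..<Suc N]" using kN upt_add_eq_append[of 0 k "Suc N - k"] by simp
    also have "[k..<Suc N] = k # [Suc k..<Suc N]" using kN by (simp add: upt_conv_Cons)
    finally show ?thesis .
  qed
  have eq: "map a [0..<k] = map b [0..<k]" using k(1) by simp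
  have L: "map a [0..<Suc N] = map a [0..<k] @ a k # map a [Suc k..<Suc N]"
    and R: "map b [0..<Suc N] = map a [0..<k] @ b k # map b [Suc k..<Suc N]"
    using eq by (simp_all only: sp map_append list.map)
  show ?thesis unfolding lex_conv
    apply (simp only: mem_Collect_eq case_prod_conv)
    apply (rule conjI)
     apply simp
    apply (rule exI[of _ "map a [0..<k]"], rule exI[of _ "a k"], rule exI[of _ "b k"])
    apply (rule exI[of _ "map a [Suc k..<Suc N]"], rule exI[of _ "map b [Suc k..<Suc N]"])
    using L R k(2) by simp
qed

lemma wf_lex_mons:
  "wf {(a, b). (\<forall>i>N. a i = 0) \<and> (\<forall>i>N. b i = 0) \<and> lex_less a b}"
proof (rule wf_subset)
  show "wf (inv_image (lex less_than) (\<lambda>m. map m [0..<Suc N]))"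
    by (intro wf_inv_image wf_lex wf_less_than)
  show "{(a, b). (\<forall>i>N. a i = 0) \<and> (\<forall>i>N. b i = 0) \<and> lex_less a b} \<subseteq> inv_image (lex less_than) (\<lambda>m. map m [0..<Suc N])"
  proof
    fix x assume "x \<in> {(a, b). (\<forall>i>N. a i = 0) \<and> (\<forall>i>N. b i = 0) \<and> lex_less a b}"
    then obtain a b where "x = (a, b)" "\<forall>i>N. a i = 0" "\<forall>i>N. b i = 0" "lex_less a b" by blast
    then show "x \<in> inv_image (lex less_than) (\<lambda>m. map m [0..<Suc N])"
      using lex_list[of a b N] by simp
  qed
qed



definition spanned :: "nat \<Rightarrow> (nat \<Rightarrow> (nat\<Rightarrow>nat) \<Rightarrow> 'a::field) \<Rightarrow> (nat\<Rightarrow>nat) set \<Rightarrow> (nat\<Rightarrow>nat) set \<Rightarrow> (nat\<Rightarrow>nat) \<Rightarrow> bool" where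
 "spanned t u M S m \<longleftrightarrow> (\<exists>D d. finite D \<and> D \<subseteq> S \<and>
     (\<forall>i\<in>{1..t}. \<forall>k\<in>M. u i (madd m k) = (\<Sum>s\<in>D. d s * u i (madd s k))))"

lemma sp_refl: "m \<in> S \<Longrightarrow> spanned t u M S m"
  unfolding spanned_def by (intro exI[of _ "{m}"] exI[of _ "\<lambda>_. 1"]) auto

lemma sp_mono: "spanned t u M S m \<Longrightarrow> S \<subseteq> S' \<Longrightarrow> spanned t u M S' m"
  unfolding spanned_def by blast

definition msub :: "(nat \<Rightarrow> nat) \<Rightarrow> (nat \<Rightarrow> nat) \<Rightarrow> nat \<Rightarrow> nat" where
  "msub x w = (\<lambda>i. x i - w i)"

lemma msub_madd[simp]: "msub (madd s w) w = s" by (auto simp: msub_def madd_def)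

lemma sp_shift:
  assumes "spanned t u M S m" "\<forall>k\<in>M. madd w k \<in> M"
  shows "spanned t u M ((\<lambda>s. madd s w) ` S) (madd m w)"
proof -
  from assms(1) obtain D d where D: "finite D" "D \<subseteq> S"
    "\<forall>i\<in>{1..t}. \<forall>k\<in>M. u i (madd m k) = (\<Sum>s\<in>D. d s * u i (madd s k))"
    unfolding spanned_def by blast
  have inj: "inj_on (\<lambda>s. madd s w) D"
    by (rule inj_on_inverseI[where g="\<lambda>x. msub x w"]) simp
  show ?thesis unfolding spanned_def
  proof (intro exI[of _ "(\<lambda>s. madd s w) ` D"] exI[of _ "\<lambda>x. d (msub x w)"] conjI ballI)
    show "finite ((\<lambda>s. madd s w) ` D)" using D by simp
    show "(\<lambda>s. madd s w) ` D \<subseteq> (\<lambda>s. madd s w) ` S" using D by auto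
    fix i k assume i: "i \<in> {1..t}" and k: "k \<in> M"
    have "u i (madd (madd m w) k) = u i (madd m (madd w k))" by (simp add: madd_assoc)
    also have "\<dots> = (\<Sum>s\<in>D. d s * u i (madd s (madd w k)))" using D(3) i k assms(2) by blast
    also have "\<dots> = (\<Sum>s\<in>D. d (msub (madd s w) w) * u i (madd (madd s w) k))"
      by (simp add: madd_assoc)
    also have "\<dots> = (\<Sum>x\<in>(\<lambda>s. madd s w) ` D. d (msub x w) * u i (madd x k))"
      by (subst sum.reindex[OF inj]) simp
    finally show "u i (madd (madd m w) k) = (\<Sum>x\<in>(\<lambda>s. madd s w) ` D. d (msub x w) * u i (madd x k))" .
  qed
qed

lemma sp_trans:
  assumes "spanned t u M T m" "\<forall>x\<in>T. spanned t u M S x"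
  shows "spanned t u M S m"
proof -
  from assms(1) obtain D d where D: "finite D" "D \<subseteq> T"
    "\<forall>i\<in>{1..t}. \<forall>k\<in>M. u i (madd m k) = (\<Sum>s\<in>D. d s * u i (madd s k))"
    unfolding spanned_def by blast
  have "\<forall>x\<in>T. \<exists>E e. finite E \<and> E \<subseteq> S \<and>
     (\<forall>i\<in>{1..t}. \<forall>k\<in>M. u i (madd x k) = (\<Sum>s\<in>E. e s * u i (madd s k)))"
    using assms(2) unfolding spanned_def by blast
  then obtain E e where E: "\<And>x. x \<in> T \<Longrightarrow> finite (E x) \<and> E x \<subseteq> S \<and>
     (\<forall>i\<in>{1..t}. \<forall>k\<in>M. u i (madd x k) = (\<Sum>s\<in>E x. e x s * u i (madd s k)))"
    by metis
  define F where "F = (\<Union>x\<in>D. E x)"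
  have F: "finite F" "F \<subseteq> S" unfolding F_def using D E by (blast, force)
  show ?thesis unfolding spanned_def
  proof (intro exI[of _ F] exI[of _ "\<lambda>y. \<Sum>x\<in>D. d x * (if y \<in> E x then e x y else 0)"] conjI ballI F)
    fix i k assume i: "i \<in> {1..t}" and k: "k \<in> M"
    have "u i (madd m k) = (\<Sum>x\<in>D. d x * u i (madd x k))" using D(3) i k by blast
    also have "\<dots> = (\<Sum>x\<in>D. d x * (\<Sum>y\<in>F. (if y \<in> E x then e x y else 0) * u i (madd y k)))"
    proof (rule sum.cong[OF refl])
      fix x assume x: "x \<in> D"
      have Ex: "E x \<subseteq> F" using x unfolding F_def by auto
      have "u i (madd x k) = (\<Sum>y\<in>E x. e x y * u i (madd y k))" using E[of x] x D(2) i k by blast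
      also have "\<dots> = (\<Sum>y\<in>F. (if y \<in> E x then e x y else 0) * u i (madd y k))"
        using Ex F(1) by (simp add: if_distrib[of "\<lambda>z. z * _"] sum.If_cases Int_absorb1 cong: if_cong)
      finally show "d x * u i (madd x k) = d x * (\<Sum>y\<in>F. (if y \<in> E x then e x y else 0) * u i (madd y k))" by simp
    qed
    also have "\<dots> = (\<Sum>y\<in>F. (\<Sum>x\<in>D. d x * (if y \<in> E x then e x y else 0)) * u i (madd y k))"
      by (simp add: sum_distrib_left sum_distrib_right sum.swap[of _ D] mult.assoc)
    finally show "u i (madd m k) = (\<Sum>y\<in>F. (\<Sum>x\<in>D. d x * (if y \<in> E x then e x y else 0)) * u i (madd y k))" .
  qed
qed

lemma act_superset:
  assumes "finite F" "{k. f k \<noteq> 0} \<subseteq> F"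
  shows "act f w m = (\<Sum>k\<in>F. f k * w (madd m k))"
  unfolding act_def by (rule sum.mono_neutral_left) (use assms in auto)

lemma lincomb_supp: "{x. lincomb bs c x \<noteq> 0} \<subseteq> set bs"
proof
  fix x assume "x \<in> {x. lincomb bs c x \<noteq> 0}"
  then have "{l. l < length bs \<and> bs ! l = x} \<noteq> {}" unfolding lincomb_def by force
  then show "x \<in> set bs" by (auto simp: in_set_conv_nth)
qed

lemma sum_lincomb:
  "(\<Sum>x\<in>set bs. lincomb bs c x * \<phi> x) = (\<Sum>l<length bs. c l * \<phi> (bs ! l))"
proof -
  have "(\<Sum>x\<in>set bs. lincomb bs c x * \<phi> x) = (\<Sum>x\<in>set bs. \<Sum>l\<in>{l. l \<in> {..<length bs} \<and> bs ! l = x}. c l * \<phi> (bs ! l))"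
    unfolding lincomb_def by (simp add: sum_distrib_right)
  also have "\<dots> = (\<Sum>l<length bs. c l * \<phi> (bs ! l))"
    by (rule sum.group) auto
  finally show ?thesis .
qed

lemma act_lincomb: "act (lincomb bs c) w m = (\<Sum>l<length bs. c l * w (madd m (bs ! l)))"
  by (subst act_superset[of "set bs"]) (simp_all add: lincomb_supp sum_lincomb)

lemma ann_lin:
  assumes "finite K" "\<forall>k\<in>K. g k \<in> ann_vars V t u"
  shows "(\<lambda>x. \<Sum>k\<in>K. a k * g k x) \<in> ann_vars V t u"
proof -
  define F where "F = (\<Union>k\<in>K. {x. g k x \<noteq> 0})"
  have g: "finite {x. g k x \<noteq> 0}" "{x. g k x \<noteq> 0} \<subseteq> mons V" if "k \<in> K" for k
    using assms that unfolding ann_vars_def polys_def by auto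
  have F: "finite F" "F \<subseteq> mons V" unfolding F_def using g assms(1) by auto
  have supp: "{x. (\<Sum>k\<in>K. a k * g k x) \<noteq> 0} \<subseteq> F"
  proof
    fix x assume "x \<in> {x. (\<Sum>k\<in>K. a k * g k x) \<noteq> 0}"
    then obtain k where "k \<in> K" "a k * g k x \<noteq> 0" by (metis (mono_tags) mem_Collect_eq sum.neutral)
    then show "x \<in> F" unfolding F_def by auto
  qed
  have "(\<lambda>x. \<Sum>k\<in>K. a k * g k x) \<in> polys V"
    unfolding polys_def using supp F by (auto intro: finite_subset)
  moreover have "act (\<lambda>x. \<Sum>k\<in>K. a k * g k x) (u i) m = 0" if "i \<in> {1..t}" "m \<in> mons V" for i m
  proof -
    have "act (\<lambda>x. \<Sum>k\<in>K. a k * g k x) (u i) m = (\<Sum>x\<in>F. (\<Sum>k\<in>K. a k * g k x) * u i (madd m x))"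
      by (rule act_superset[OF F(1) supp])
    also have "\<dots> = (\<Sum>k\<in>K. a k * (\<Sum>x\<in>F. g k x * u i (madd m x)))"
      by (simp add: sum_distrib_right sum_distrib_left sum.swap[of _ F] mult.assoc)
    also have "\<dots> = (\<Sum>k\<in>K. a k * act (g k) (u i) m)"
    proof (rule sum.cong[OF refl])
      fix k assume k: "k \<in> K"
      have "{x. g k x \<noteq> 0} \<subseteq> F" using k unfolding F_def by auto
      then show "a k * (\<Sum>x\<in>F. g k x * u i (madd m x)) = a k * act (g k) (u i) m"
        using act_superset[OF F(1), of "g k" "u i" m] by simp
    qed
    also have "\<dots> = 0" using assms(2) that unfolding ann_vars_def by simp
    finally show ?thesis .
  qed
  ultimately show ?thesis unfolding ann_vars_def by blast
qed



definition ej :: "nat \<Rightarrow> nat \<Rightarrow> nat \<Rightarrow> nat" where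
  "ej j k = (\<lambda>i. if i = j then k else 0)"

lemma ej_j[simp]: "ej j k j = k" by (simp add: ej_def)
lemma ej_inj: "ej j a = ej j b \<longleftrightarrow> a = b" by (metis ej_j)
lemma ej_mons: "j \<in> V \<Longrightarrow> ej j k \<in> mons V" by (auto simp: ej_def mons_def)
lemma ej_madd: "madd (ej j a) (ej j b) = ej j (a + b)" by (auto simp: ej_def madd_def)
lemma ej_iff: "(\<forall>i. i \<noteq> j \<longrightarrow> x i = 0) \<longleftrightarrow> x = ej j (x j)" by (auto simp: ej_def fun_eq_iff)

lemma sum_mono_ej: assumes "finite K" shows
  "(\<Sum>k\<in>K. a k * mono (ej j k) x) = (if x = ej j (x j) \<and> x j \<in> K then a (x j) else (0::'a::field))"
proof -
  have "(\<Sum>k\<in>K. a k * mono (ej j k) x) = (\<Sum>k\<in>K. if k = x j then (if x = ej j (x j) then a k else 0) else 0)"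
    by (rule sum.cong) (auto simp: mono_def)
  also have "\<dots> = (if x = ej j (x j) \<and> x j \<in> K then a (x j) else 0)"
    using sum.delta[OF assms, of "x j" "\<lambda>k. if x = ej j (x j) then a k else 0"] by auto
  finally show ?thesis .
qed

lemma minpoly_exists:
  fixes u :: "nat \<Rightarrow> (nat \<Rightarrow> nat) \<Rightarrow> 'a::field"
  assumes zd: "zero_dim {1..n} (ann_vars {1..n} t u)" and j: "j \<in> {1..n}"
  shows "\<exists>p. lead_coeff p = 1 \<and> var_eval j p \<in> ann_vars {1..n} t u"
proof -
  let ?J = "ann_vars {1..n} t u"
  from zd obtain S where S: "finite S" "S \<subseteq> mons {1..n}"
    "\<forall>m\<in>mons {1..n}. \<exists>c. (\<lambda>x. mono m x - (\<Sum>s\<in>S. c s * mono s x)) \<in> ?J"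
    unfolding zero_dim_def by blast
  have "\<forall>k. \<exists>c. (\<lambda>x. mono (ej j k) x - (\<Sum>s\<in>S. c s * mono s x)) \<in> ?J"
    using S(3) ej_mons[OF j] by blast
  then obtain c where c: "\<And>k. (\<lambda>x. mono (ej j k) x - (\<Sum>s\<in>S. c k s * mono s x)) \<in> ?J"
    by metis
  define K where "K = {..card S}"
  have "card S < card K" "finite K" unfolding K_def by auto
  from hom_sys[OF S(1) this(2) this(1), of c] obtain a where
    a: "\<exists>k\<in>K. a k \<noteq> 0" "\<forall>s\<in>S. (\<Sum>k\<in>K. a k * c k s) = 0" by blast
  define D where "D = Max {k\<in>K. a k \<noteq> 0}"
  have fin: "finite {k\<in>K. a k \<noteq> 0}" unfolding K_def by auto
  have D: "D \<in> K" "a D \<noteq> 0" using Max_in[OF fin] a(1) unfolding D_def by auto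
  have Dmax: "a k = 0" if "k \<in> K" "D < k" for k
    using Max_ge[OF fin, of k] that unfolding D_def by force
  define p where "p = smult (inverse (a D)) (Poly (map a [0..<Suc D]))"
  have cp: "coeff p e = inverse (a D) * (if e \<le> D then a e else 0)" for e
    unfolding p_def by (simp add: nth_default_def del: upt_Suc)
  have degp: "degree p = D"
  proof (rule antisym)
    show "degree p \<le> D" by (rule degree_le) (simp add: cp)
    show "D \<le> degree p" by (rule le_degree) (simp add: cp D)
  qed
  have lc: "lead_coeff p = 1" using D by (simp add: degp cp)
  have h: "(\<lambda>x. \<Sum>k\<in>K. (inverse (a D) * a k) * (mono (ej j k) x - (\<Sum>s\<in>S. c k s * mono s x))) \<in> ?J"
    by (rule ann_lin) (use c K_def in auto)
  have eq: "(\<Sum>k\<in>K. (inverse (a D) * a k) * (mono (ej j k) x - (\<Sum>s\<in>S. c k s * mono s x)))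
       = var_eval j p x" for x
  proof -
    have "(\<Sum>k\<in>K. (inverse (a D) * a k) * (mono (ej j k) x - (\<Sum>s\<in>S. c k s * mono s x)))
        = (\<Sum>k\<in>K. (inverse (a D) * a k) * mono (ej j k) x)
          - inverse (a D) * (\<Sum>s\<in>S. (\<Sum>k\<in>K. a k * c k s) * mono s x)"
      by (simp add: algebra_simps sum_subtractf sum_distrib_left sum_distrib_right sum.swap[of _ K])
    also have "\<dots> = (\<Sum>k\<in>K. (inverse (a D) * a k) * mono (ej j k) x)"
      using a(2) by simp
    also have "\<dots> = (if x = ej j (x j) \<and> x j \<in> K then inverse (a D) * a (x j) else 0)"
      by (rule sum_mono_ej) (simp add: K_def)
    also have "\<dots> = var_eval j p x"
      unfolding var_eval_def ej_iff cp using Dmax D(1) unfolding K_def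
      by (auto simp: not_le)
    finally show ?thesis .
  qed
  have "var_eval j p \<in> ?J" using h unfolding eq .
  with lc show ?thesis by blast
qed



lemma minpoly_rel:
  assumes "var_eval j p \<in> ann_vars V t u" "i \<in> {1..t}" "k \<in> mons V"
  shows "(\<Sum>e\<le>degree p. coeff p e * u i (madd k (ej j e))) = 0"
proof -
  have supp: "{x. var_eval j p x \<noteq> 0} \<subseteq> ej j ` {..degree p}"
  proof
    fix x assume "x \<in> {x. var_eval j p x \<noteq> 0}"
    then have "x = ej j (x j)" "coeff p (x j) \<noteq> 0"
      unfolding var_eval_def ej_iff by (auto split: if_splits)
    then show "x \<in> ej j ` {..degree p}" using le_degree by blast
  qed
  have inj: "inj_on (ej j) {..degree p}" by (rule inj_onI) (simp add: ej_inj)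
  have "0 = act (var_eval j p) (u i) k" using assms unfolding ann_vars_def by auto
  also have "\<dots> = (\<Sum>x\<in>ej j ` {..degree p}. var_eval j p x * u i (madd k x))"
    by (rule act_superset[OF _ supp]) simp
  also have "\<dots> = (\<Sum>e\<le>degree p. var_eval j p (ej j e) * u i (madd k (ej j e)))"
    by (simp add: sum.reindex[OF inj])
  also have "\<dots> = (\<Sum>e\<le>degree p. coeff p e * u i (madd k (ej j e)))"
    by (rule sum.cong) (auto simp: var_eval_def ej_def)
  finally show ?thesis by simp
qed

lemma pow_span:
  assumes ev: "var_eval j p \<in> ann_vars {1..n} t u" and lc: "lead_coeff p = 1"
    and dB: "degree p \<le> B" and j: "j \<in> {1..n}"
  shows "spanned t u (mons {j..n}) (ej j ` {..<B}) (ej j a)"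
proof -
  let ?M = "mons {j..n}"
  let ?d = "degree p"
  have MM: "?M \<subseteq> mons {1..n}" using j unfolding mons_def by auto
  have shiftM: "\<forall>k\<in>?M. madd w k \<in> ?M" if "w \<in> ?M" for w
    using that unfolding mons_def madd_def by auto
  have base: "spanned t u ?M (ej j ` {..<?d}) (ej j ?d)"
    unfolding spanned_def
  proof (intro exI[of _ "ej j ` {..<?d}"] exI[of _ "\<lambda>s. - coeff p (s j)"] conjI ballI)
    show "finite (ej j ` {..<?d})" by simp
    show "ej j ` {..<?d} \<subseteq> ej j ` {..<?d}" by simp
    fix i k assume i: "i \<in> {1..t}" and k: "k \<in> ?M"
    have inj: "inj_on (ej j) {..<?d}" by (rule inj_onI) (simp add: ej_inj)
    have "0 = (\<Sum>e\<le>?d. coeff p e * u i (madd k (ej j e)))"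
      using minpoly_rel[OF ev i] k MM by auto
    also have "\<dots> = (\<Sum>e<?d. coeff p e * u i (madd k (ej j e))) + u i (madd k (ej j ?d))"
      using lc by (simp add: lessThan_Suc_atMost[symmetric])
    finally have "u i (madd (ej j ?d) k) = - (\<Sum>e<?d. coeff p e * u i (madd (ej j e) k))"
      by (simp add: madd_comm eq_neg_iff_add_eq_0 add.commute)
    also have "\<dots> = (\<Sum>e<?d. - coeff p (ej j e j) * u i (madd (ej j e) k))"
      by (simp add: sum_negf)
    also have "\<dots> = (\<Sum>s\<in>ej j ` {..<?d}. - coeff p (s j) * u i (madd s k))"
      by (simp add: sum.reindex[OF inj])
    finally show "u i (madd (ej j ?d) k) = (\<Sum>s\<in>ej j ` {..<?d}. - coeff p (s j) * u i (madd s k))" .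
  qed
  show ?thesis
  proof (induction a rule: less_induct)
    case (less a)
    show ?case
    proof (cases "a < ?d")
      case True then show ?thesis using dB by (intro sp_refl) auto
    next
      case False
      define w where "w = ej j (a - ?d)"
      have w: "w \<in> ?M" unfolding w_def using j by (intro ej_mons) auto
      have s1: "spanned t u ?M ((\<lambda>s. madd s w) ` ej j ` {..<?d}) (madd (ej j ?d) w)"
        by (rule sp_shift[OF base shiftM[OF w]])
      have s2: "madd (ej j ?d) w = ej j a" unfolding w_def ej_madd using False by simp
      have s3: "\<forall>x\<in>(\<lambda>s. madd s w) ` ej j ` {..<?d}. spanned t u ?M (ej j ` {..<B}) x"
      proof
        fix x assume "x \<in> (\<lambda>s. madd s w) ` ej j ` {..<?d}"
        then obtain e where e0: "e < ?d" "x = madd (ej j e) w" by auto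
        then have e: "e < ?d" "x = ej j (e + (a - ?d))" unfolding w_def ej_madd by auto
        have "e + (a - ?d) < a" using e False by auto
        then show "spanned t u ?M (ej j ` {..<B}) x" using less e by simp
      qed
      show ?thesis using sp_trans[OF s1[unfolded s2] s3] .
    qed
  qed
qed



lemma mons_shift: "a \<in> mons V \<Longrightarrow> b \<in> mons V \<Longrightarrow> madd a b \<in> mons V"
  unfolding mons_def madd_def by auto

lemma std_span:
  fixes u :: "nat \<Rightarrow> (nat \<Rightarrow> nat) \<Rightarrow> 'a::field"
  assumes sub: "ann_vars {j+1..n} t u \<subseteq> ann_vars {j..n} t u"
  shows "m \<in> mons {j+1..n} \<Longrightarrow> spanned t u (mons {j..n}) (std_mons {j+1..n} (ann_vars {j+1..n} t u)) m"
proof (induction m rule: wf_induct[OF wf_lex_mons[of n]])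
  case (1 m)
  let ?M = "mons {j..n}"
  let ?J = "ann_vars {j+1..n} t u"
  let ?S = "std_mons {j+1..n} ?J"
  have MM: "mons {j+1..n} \<subseteq> ?M" unfolding mons_def by auto
  show ?case
  proof (cases "m \<in> ?S")
    case True then show ?thesis by (rule sp_refl)
  next
    case False
    then obtain g where g: "g \<in> ?J" "g \<noteq> (\<lambda>_. 0)" "mdvd (lead_mon g) m"
      using 1(2) unfolding std_mons_def by blast
    have gp: "finite {x. g x \<noteq> 0}" "{x. g x \<noteq> 0} \<subseteq> mons {j+1..n}"
      using g(1) unfolding ann_vars_def polys_def by auto
    define L where "L = lead_mon g"
    have L: "g L \<noteq> 0" "\<And>m'. g m' \<noteq> 0 \<Longrightarrow> m' = L \<or> lex_less m' L"
      using lead_mon[OF gp(1) g(2)] unfolding L_def by auto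
    define Sg where "Sg = {x. g x \<noteq> 0} - {L}"
    have gj: "g \<in> ann_vars {j..n} t u" using g(1) sub by blast
    have spL: "spanned t u ?M Sg L" unfolding spanned_def
    proof (intro exI[of _ Sg] exI[of _ "\<lambda>x. - g x / g L"] conjI ballI)
      show "finite Sg" "Sg \<subseteq> Sg" unfolding Sg_def using gp by auto
      fix i k assume i: "i \<in> {1..t}" and k: "k \<in> ?M"
      have "0 = act g (u i) k" using gj i k unfolding ann_vars_def by auto
      also have "\<dots> = (\<Sum>x\<in>{x. g x \<noteq> 0}. g x * u i (madd k x))" unfolding act_def ..
      also have "\<dots> = g L * u i (madd k L) + (\<Sum>x\<in>Sg. g x * u i (madd k x))"
        unfolding Sg_def using gp(1) L(1) by (simp add: sum.remove)
      finally have "g L * u i (madd L k) = - (\<Sum>x\<in>Sg. g x * u i (madd x k))"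
        by (simp add: madd_comm eq_neg_iff_add_eq_0)
      then have "u i (madd L k) = - (\<Sum>x\<in>Sg. g x * u i (madd x k)) / g L"
        using L(1) by (simp add: field_simps)
      also have "\<dots> = (\<Sum>x\<in>Sg. - g x / g L * u i (madd x k))"
        by (simp add: sum_negf sum_divide_distrib)
      finally show "u i (madd L k) = (\<Sum>x\<in>Sg. - g x / g L * u i (madd x k))" .
    qed
    define w where "w = msub m L"
    have Lm: "L \<in> mons {j+1..n}" using gp(2) L(1) by auto
    have w: "w \<in> mons {j+1..n}" using 1(2) unfolding w_def msub_def mons_def by auto
    have mw: "madd L w = m" using g(3) unfolding L_def[symmetric] w_def msub_def madd_def mdvd_def
      by (auto simp: fun_eq_iff)
    have s1: "spanned t u ?M ((\<lambda>s. madd s w) ` Sg) m"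
      using sp_shift[OF spL, of w] mw w MM mons_shift by (metis subsetD)
    have s2: "\<forall>x\<in>(\<lambda>s. madd s w) ` Sg. spanned t u ?M ?S x"
    proof
      fix x assume "x \<in> (\<lambda>s. madd s w) ` Sg"
      then obtain s where s: "s \<in> Sg" "x = madd s w" by auto
      have sm: "s \<in> mons {j+1..n}" "lex_less s L" using s(1) gp(2) L(2)[of s] unfolding Sg_def by auto
      have xm: "x \<in> mons {j+1..n}" using s(2) sm(1) w mons_shift by simp
      have "lex_less x m" using lex_madd[OF sm(2), of w] s(2) mw by simp
      moreover have "\<forall>i>n. x i = 0" "\<forall>i>n. m i = 0" using xm 1(2) unfolding mons_def by auto
      ultimately have "(x, m) \<in> {(a, b). (\<forall>i>n. a i = 0) \<and> (\<forall>i>n. b i = 0) \<and> lex_less a b}" by simp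
      then show "spanned t u ?M ?S x" using 1(1) xm by blast
    qed
    show ?thesis by (rule sp_trans[OF s1 s2])
  qed
qed



lemma Cset_mons: "set Bp \<subseteq> mons {j+1..n} \<Longrightarrow> j \<le> n \<Longrightarrow> Cset j B Bp \<subseteq> mons {j..n}"
  unfolding Cset_def mons_def madd_def by auto

theorem lemma4:
  fixes u :: "nat \<Rightarrow> (nat \<Rightarrow> nat) \<Rightarrow> 'a::field"
    and n t j B :: nat
    and Bp bs :: "(nat \<Rightarrow> nat) list"
  assumes perf: "perfect_field TYPE('a)"
    and zd: "zero_dim {1..n} (ann_vars {1..n} t u)"
    and minpoly: "\<forall>j'\<in>{1..n}. minpoly_deg (ann_vars {1..n} t u) j' \<le> B"
    and j: "j \<in> {1..n}"
    and Bp: "set Bp \<subseteq> mons {j+1..n}"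
    and Bpn: "j = n \<Longrightarrow> Bp = [(\<lambda>_. 0)]"
    and bs: "set bs \<subseteq> mons {j..n}"
  shows "(dependent_mod (ann_vars {j..n} t u) bs \<longrightarrow> null_nontriv t u (Cset j B Bp) bs)
     \<and> ((j \<le> n - 1 \<and> distinct Bp \<and> set Bp = std_mons {j+1..n} (ann_vars {j+1..n} t u)
          \<and> ann_vars {j..n} t u \<inter> polys {j+1..n} = ann_vars {j+1..n} t u)
        \<longrightarrow> (null_nontriv t u (Cset j B Bp) bs \<longrightarrow> dependent_mod (ann_vars {j..n} t u) bs))"
proof (intro conjI impI)
  let ?M = "mons {j..n}"
  let ?C = "Cset j B Bp"
  have CM: "?C \<subseteq> ?M" using Cset_mons[OF Bp] j by auto
  assume dep: "dependent_mod (ann_vars {j..n} t u) bs"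
  then obtain c where c: "\<exists>l<length bs. c l \<noteq> 0" "lincomb bs c \<in> ann_vars {j..n} t u"
    unfolding dependent_mod_def by blast
  show "null_nontriv t u ?C bs" unfolding null_nontriv_def
  proof (intro exI[of _ c] conjI ballI)
    show "\<exists>l<length bs. c l \<noteq> 0" by fact
    fix i b' assume i: "i \<in> {1..t}" and b': "b' \<in> ?C"
    have "0 = act (lincomb bs c) (u i) b'" using c(2) i b' CM unfolding ann_vars_def by auto
    also have "\<dots> = (\<Sum>l<length bs. u i (madd (bs ! l) b') * c l)"
      unfolding act_lincomb by (simp add: madd_comm mult.commute)
    finally show "(\<Sum>l<length bs. u i (madd (bs ! l) b') * c l) = 0" by simp
  qed
next
  let ?M = "mons {j..n}"
  let ?C = "Cset j B Bp"
  let ?J = "ann_vars {1..n} t u"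
  assume H: "j \<le> n - 1 \<and> distinct Bp \<and> set Bp = std_mons {j+1..n} (ann_vars {j+1..n} t u)
          \<and> ann_vars {j..n} t u \<inter> polys {j+1..n} = ann_vars {j+1..n} t u"
  assume nn: "null_nontriv t u ?C bs"
  then obtain v where v: "\<exists>l<length bs. v l \<noteq> 0"
    "\<forall>i\<in>{1..t}. \<forall>b'\<in>?C. (\<Sum>l<length bs. u i (madd (bs ! l) b') * v l) = 0"
    unfolding null_nontriv_def by blast
  have sub: "ann_vars {j+1..n} t u \<subseteq> ann_vars {j..n} t u"
  proof -
    have "ann_vars {j+1..n} t u \<subseteq> polys {j+1..n}" unfolding ann_vars_def by auto
    then show ?thesis using H by blast
  qed
  obtain p0 where "lead_coeff p0 = 1" "var_eval j p0 \<in> ?J" using minpoly_exists[OF zd j] by blast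
  then have ex: "\<exists>p. lead_coeff p = 1 \<and> degree p = degree p0 \<and> var_eval j p \<in> ?J" by blast
  have "\<exists>d. \<exists>p. lead_coeff p = 1 \<and> degree p = d \<and> var_eval j p \<in> ?J" using ex by blast
  then have "\<exists>p. lead_coeff p = 1 \<and> degree p = (LEAST d. \<exists>p. lead_coeff p = 1 \<and> degree p = d \<and> var_eval j p \<in> ?J) \<and> var_eval j p \<in> ?J"
    by (rule LeastI_ex)
  then obtain p where p: "lead_coeff p = 1" "degree p = minpoly_deg ?J j" "var_eval j p \<in> ?J"
    unfolding minpoly_deg_def by blast
  have dB: "degree p \<le> B" using p(2) minpoly j by auto
  have MM: "mons {j+1..n} \<subseteq> ?M" unfolding mons_def by auto
  have shiftM: "\<forall>k\<in>?M. madd w k \<in> ?M" if "w \<in> ?M" for w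
    using that mons_shift by blast
  have Cspan: "spanned t u ?M ?C m" if m: "m \<in> ?M" for m
  proof -
    define m' where "m' = (\<lambda>i. if i = j then 0 else m i)"
    define w where "w = ej j (m j)"
    have m'M: "m' \<in> mons {j+1..n}" using m unfolding m'_def mons_def by auto
    have wM: "w \<in> ?M" unfolding w_def using j by (intro ej_mons) auto
    have mm: "madd m' w = m" unfolding m'_def w_def ej_def madd_def by auto
    have s0: "spanned t u ?M (set Bp) m'" using std_span[OF sub m'M] H by simp
    have s1: "spanned t u ?M ((\<lambda>s. madd s w) ` set Bp) m"
      using sp_shift[OF s0 shiftM[OF wM]] mm by simp
    have s2: "\<forall>x\<in>(\<lambda>s. madd s w) ` set Bp. spanned t u ?M ?C x"
    proof
      fix x assume "x \<in> (\<lambda>s. madd s w) ` set Bp"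
      then obtain b where b: "b \<in> set Bp" "x = madd b w" by auto
      have bM: "b \<in> ?M" using b(1) Bp MM by auto
      have "spanned t u ?M (ej j ` {..<B}) w" unfolding w_def
        by (rule pow_span[OF p(3) p(1) dB j])
      from sp_shift[OF this shiftM[OF bM]]
      have "spanned t u ?M ((\<lambda>s. madd s b) ` ej j ` {..<B}) x" using b(2) by (simp add: madd_comm)
      moreover have "(\<lambda>s. madd s b) ` ej j ` {..<B} \<subseteq> ?C"
      proof
        fix y assume "y \<in> (\<lambda>s. madd s b) ` ej j ` {..<B}"
        then obtain k where k: "k < B" "y = madd (ej j k) b" by auto
        then have "y = madd b (\<lambda>x. if x = j then k else 0)" by (simp add: madd_comm ej_def)
        then show "y \<in> ?C" unfolding Cset_def using b(1) k(1) by blast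
      qed
      ultimately show "spanned t u ?M ?C x" by (rule sp_mono)
    qed
    show ?thesis by (rule sp_trans[OF s1 s2])
  qed
  show "dependent_mod (ann_vars {j..n} t u) bs" unfolding dependent_mod_def
  proof (intro exI[of _ v] conjI)
    show "\<exists>l<length bs. v l \<noteq> 0" by fact
    have pol: "lincomb bs v \<in> polys {j..n}" unfolding polys_def
      using lincomb_supp[of bs v] bs by (auto intro: finite_subset)
    have "act (lincomb bs v) (u i) m = 0" if i: "i \<in> {1..t}" and m: "m \<in> ?M" for i m
    proof -
      obtain D d where D: "finite D" "D \<subseteq> ?C"
        "\<forall>i\<in>{1..t}. \<forall>k\<in>?M. u i (madd m k) = (\<Sum>s\<in>D. d s * u i (madd s k))"
        using Cspan[OF m] unfolding spanned_def by blast
      have "act (lincomb bs v) (u i) m = (\<Sum>l<length bs. v l * u i (madd m (bs ! l)))"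
        by (rule act_lincomb)
      also have "\<dots> = (\<Sum>l<length bs. v l * (\<Sum>s\<in>D. d s * u i (madd s (bs ! l))))"
      proof (rule sum.cong[OF refl])
        fix l assume "l \<in> {..<length bs}"
        then have "bs ! l \<in> ?M" using bs by auto
        then show "v l * u i (madd m (bs ! l)) = v l * (\<Sum>s\<in>D. d s * u i (madd s (bs ! l)))"
          using D(3) i by simp
      qed
      also have "\<dots> = (\<Sum>s\<in>D. d s * (\<Sum>l<length bs. u i (madd (bs ! l) s) * v l))"
        by (simp add: sum_distrib_left sum.swap[of _ D] madd_comm mult.commute mult.left_commute)
      also have "\<dots> = 0" using v(2) i D(2) by (simp add: subset_iff)
      finally show ?thesis .
    qed
    then show "lincomb bs v \<in> ann_vars {j..n} t u" unfolding ann_vars_def using pol by blast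
  qed
qed


end
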